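(* There is a universal constant $K$ such that for every network $G(V)$ with $|V|\ge2$, writing $\gamma_2=\gamma_2(V,\sqrt{R_{\mathrm{eff}}})$, for all $u\ge16$, $$\sum_{v\in V}e^{-u\,c_v\,\gamma_2^2}\le K\,e^{-u/8}.$$
   Context: A network is a finite connected graph $G=(V,E)$ with symmetric conductances $c_{xy}\ge0$, $c_{xy}>0$ iff $xy\in E$; $c_v=\sum_yc_{vy}$; $R_{\mathrm{eff}}$ is effective resistance and $\sqrt{R_{\mathrm{eff}}}$ is the metric $(x,y)\mapsto\sqrt{R_{\mathrm{eff}}(x,y)}$. Talagrand's functional: with $M_0=1$, $M_k=2^{2^k}$, an admissible sequence is a nested sequence of partitions $\{\mathcal A_k\}_{k\ge0}$ ($\mathcal A_{k+1}$ refines $\mathcal A_k$) with $|\mathcal A_k|\le M_k$; $\gamma_2(X,d)=\inf\sup_{x}\sum_{k\ge0}2^{k/2}\mathrm{diam}(A_k(x))$ over admissible sequences, $A_k(x)$ the block of $\mathcal A_k$ containing $x$. *)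

theory Defs
  imports "HOL-Analysis.Analysis"
begin

definition network :: "'a set \<Rightarrow> ('a \<Rightarrow> 'a \<Rightarrow> real) \<Rightarrow> bool" where
  "network V c \<longleftrightarrow> finite V \<and>
     (\<forall>x y. c x y = c y x) \<and> (\<forall>x y. 0 \<le> c x y) \<and> (\<forall>x. c x x = 0) \<and>
     (\<forall>x y. 0 < c x y \<longrightarrow> x \<in> V \<and> y \<in> V) \<and>
     (\<forall>x\<in>V. \<forall>y\<in>V. (\<lambda>a b. a \<in> V \<and> b \<in> V \<and> 0 < c a b)\<^sup>*\<^sup>* x y)"

definition cond_at :: "'a set \<Rightarrow> ('a \<Rightarrow> 'a \<Rightarrow> real) \<Rightarrow> 'a \<Rightarrow> real" where
  "cond_at V c v = (\<Sum>y\<in>V. c v y)"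

definition energy :: "'a set \<Rightarrow> ('a \<Rightarrow> 'a \<Rightarrow> real) \<Rightarrow> ('a \<Rightarrow> real) \<Rightarrow> real" where
  "energy V c f = (1/2) * (\<Sum>x\<in>V. \<Sum>y\<in>V. c x y * (f x - f y)^2)"

text \<open>Effective resistance via the Dirichlet principle:
  R_eff(x,y)^{-1} = inf { E(f) : f x = 1, f y = 0 } for x \<noteq> y, and R_eff(x,x) = 0.\<close>
definition R_eff :: "'a set \<Rightarrow> ('a \<Rightarrow> 'a \<Rightarrow> real) \<Rightarrow> 'a \<Rightarrow> 'a \<Rightarrow> real" where
  "R_eff V c x y = (if x = y then 0
     else 1 / Inf {energy V c f | f. f x = 1 \<and> f y = 0})"

definition diam_R :: "'a set \<Rightarrow> ('a \<Rightarrow> 'a \<Rightarrow> real) \<Rightarrow> 'a set \<Rightarrow> real" where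
  "diam_R V c A = (if A = {} then 0 else Sup {sqrt (R_eff V c x y) | x y. x \<in> A \<and> y \<in> A})"

definition M_card :: "nat \<Rightarrow> nat" where
  "M_card k = (if k = 0 then 1 else 2 ^ (2 ^ k))"

definition is_partition :: "'a set \<Rightarrow> 'a set set \<Rightarrow> bool" where
  "is_partition V P \<longleftrightarrow> (\<forall>A\<in>P. A \<noteq> {}) \<and> \<Union>P = V \<and>
     (\<forall>A\<in>P. \<forall>B\<in>P. A \<noteq> B \<longrightarrow> A \<inter> B = {})"

definition refines :: "'a set set \<Rightarrow> 'a set set \<Rightarrow> bool" where
  "refines P Q \<longleftrightarrow> (\<forall>A\<in>P. \<exists>B\<in>Q. A \<subseteq> B)"

definition admissible :: "'a set \<Rightarrow> (nat \<Rightarrow> 'a set set) \<Rightarrow> bool" where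
  "admissible V \<A> \<longleftrightarrow> (\<forall>k. is_partition V (\<A> k) \<and> card (\<A> k) \<le> M_card k \<and>
     refines (\<A> (Suc k)) (\<A> k))"

definition block :: "'a set set \<Rightarrow> 'a \<Rightarrow> 'a set" where
  "block P x = (THE A. A \<in> P \<and> x \<in> A)"

definition gamma2 :: "'a set \<Rightarrow> ('a \<Rightarrow> 'a \<Rightarrow> real) \<Rightarrow> real" where
  "gamma2 V c = real_of_ereal (INF \<A> \<in> {\<A>. admissible V \<A>}.
      SUP x \<in> V. SUP n. ereal (\<Sum>k<n. 2 powr (real k / 2) * diam_R V c (block (\<A> k) x)))"

end

theory Submission
  imports Defs
begin



abbreviation ps where
  "ps V c A x n \<equiv> (\<Sum>k<n. 2 powr (real k / 2) * diam_R V c (block (A k) x))"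

lemma block_eq:
  assumes "is_partition V P" "A \<in> P" "x \<in> A"
  shows "block P x = A"
proof -
  have d: "\<forall>A\<in>P. \<forall>B\<in>P. A \<noteq> B \<longrightarrow> A \<inter> B = {}" using assms(1) unfolding is_partition_def by simp
  have u: "\<And>B. B \<in> P \<Longrightarrow> x \<in> B \<Longrightarrow> B = A"
  proof -
    fix B assume "B \<in> P" "x \<in> B"
    then show "B = A" using d assms(2,3) by blast
  qed
  show ?thesis unfolding block_def using assms(2,3) u by (intro the_equality) blast+
qed

lemma block_in:
  assumes "is_partition V P" "x \<in> V"
  shows "block P x \<in> P \<and> x \<in> block P x"
proof -
  have "x \<in> \<Union>P" using assms unfolding is_partition_def by simp
  then obtain A where A: "A \<in> P" "x \<in> A" by blast
  thus ?thesis using block_eq[OF assms(1) A] by simp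
qed

lemma diam_ge:
  assumes "finite A" "x \<in> A" "y \<in> A"
  shows "sqrt (R_eff V c x y) \<le> diam_R V c A"
proof -
  have fin: "finite {sqrt (R_eff V c x y) | x y. x \<in> A \<and> y \<in> A}"
    by (rule finite_image_set2) (use assms(1) in simp_all)
  have "sqrt (R_eff V c x y) \<in> {sqrt (R_eff V c x y) | x y. x \<in> A \<and> y \<in> A}" using assms by blast
  hence "sqrt (R_eff V c x y) \<le> Sup {sqrt (R_eff V c x y) | x y. x \<in> A \<and> y \<in> A}"
    by (rule cSup_upper[OF _ bdd_above_finite[OF fin]])
  moreover have "A \<noteq> {}" using assms by auto
  ultimately show ?thesis unfolding diam_R_def by simp
qed

lemma diam_nonneg:
  assumes "finite A"
  shows "0 \<le> diam_R V c A"
proof (cases "A = {}")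
  case True thus ?thesis by (simp add: diam_R_def)
next
  case False
  then obtain a where "a \<in> A" by auto
  with diam_ge[OF assms this this, of V c] show ?thesis by (simp add: R_eff_def)
qed

lemma diam_single: "diam_R V c {x} = 0"
proof -
  have "{sqrt (R_eff V c a b) | a b. a \<in> {x} \<and> b \<in> {x}} = {0}" by (auto simp: R_eff_def)
  thus ?thesis by (simp add: diam_R_def)
qed

lemma partition_finite: "is_partition V P \<Longrightarrow> finite V \<Longrightarrow> finite P"
  unfolding is_partition_def using finite_UnionD by auto

lemma ps_ge:
  assumes "admissible V A" "finite V" "x \<in> V" "y \<in> block (A k) x"
  shows "2 powr (real k / 2) * sqrt (R_eff V c x y) \<le> ps V c A x (Suc k)"
proof -
  have P: "is_partition V (A k)" using assms(1) unfolding admissible_def by auto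
  have bl: "block (A k) x \<in> A k" "x \<in> block (A k) x" using block_in[OF P assms(3)] by auto
  have sub: "\<And>j. finite (block (A j) x)"
  proof -
    fix j
    have "is_partition V (A j)" using assms(1) unfolding admissible_def by auto
    hence "block (A j) x \<subseteq> V" using block_in[OF _ assms(3)] unfolding is_partition_def by blast
    thus "finite (block (A j) x)" using assms(2) finite_subset by blast
  qed
  have "2 powr (real k / 2) * sqrt (R_eff V c x y) \<le> 2 powr (real k / 2) * diam_R V c (block (A k) x)"
    using diam_ge[OF sub bl(2) assms(4)] by (intro mult_left_mono) auto
  also have "\<dots> \<le> ps V c A x k + 2 powr (real k / 2) * diam_R V c (block (A k) x)"
    using diam_nonneg[OF sub] by (auto intro!: sum_nonneg)
  finally show ?thesis by simp
qed

lemma pigeon: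
  assumes "admissible V A" "finite V" "S \<subseteq> V" "card S > M_card k"
  shows "\<exists>x\<in>S. \<exists>y\<in>S. x \<noteq> y \<and> y \<in> block (A k) x"
proof (rule ccontr)
  assume H: "\<not> ?thesis"
  have P: "is_partition V (A k)" and cd: "card (A k) \<le> M_card k" using assms(1) unfolding admissible_def by auto
  have "inj_on (block (A k)) S"
  proof (rule inj_onI)
    fix x y assume xy: "x \<in> S" "y \<in> S" "block (A k) x = block (A k) y"
    have "y \<in> block (A k) y" using block_in[OF P] xy assms(3) by auto
    thus "x = y" using H xy by auto
  qed
  moreover have "block (A k) ` S \<subseteq> A k" using block_in[OF P] assms(3) by auto
  ultimately have "card S \<le> card (A k)"
    using card_inj_on_le partition_finite[OF P assms(2)] by blast
  thus False using cd assms(4) by linarith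
qed




lemma gamma2_ge:
  assumes adm0: "admissible V A0" and fin: "\<forall>x\<in>V. \<forall>n. ps V c A0 x n \<le> B"
  and low: "\<forall>A. admissible V A \<longrightarrow> (\<exists>x\<in>V. \<exists>n. L \<le> ps V c A x n)"
  shows "L \<le> gamma2 V c"
proof -
  define F where "F = (\<lambda>A. SUP x\<in>V. SUP n. ereal (ps V c A x n))"
  have 1: "ereal L \<le> (INF A\<in>{A. admissible V A}. F A)"
  proof (rule INF_greatest)
    fix A assume "A \<in> {A. admissible V A}"
    then obtain x n where xn: "x\<in>V" "L \<le> ps V c A x n" using low by auto
    have "ereal L \<le> (SUP n. ereal (ps V c A x n))"
      using xn(2) by (intro SUP_upper2[of n]) auto
    also have "\<dots> \<le> F A" unfolding F_def using xn(1) by (rule SUP_upper)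
    finally show "ereal L \<le> F A" .
  qed
  have "F A0 \<le> ereal B" unfolding F_def
    by (intro SUP_least) (use fin in auto)
  hence 2: "(INF A\<in>{A. admissible V A}. F A) \<le> ereal B"
    using adm0 by (intro INF_lower2[of A0]) auto
  obtain r where r: "(INF A\<in>{A. admissible V A}. F A) = ereal r"
    using 1 2 by (cases "(INF A\<in>{A. admissible V A}. F A)") auto
  have "gamma2 V c = r" unfolding gamma2_def using r unfolding F_def by simp
  thus ?thesis using 1 r by simp
qed




lemma adm_exists:
  assumes "finite V" "V \<noteq> {}"
  shows "\<exists>A0 B. admissible V A0 \<and> (\<forall>x\<in>V. \<forall>n. ps V c A0 x n \<le> B)"
proof -
  define k0 where "k0 = Suc (card V)"
  define S where "S = (\<lambda>x. {x}) ` V"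
  define A0 where "A0 = (\<lambda>k::nat. if k < k0 then {V} else S)"
  have pV: "is_partition V {V}" using assms(2) unfolding is_partition_def by auto
  have pS: "is_partition V S" unfolding is_partition_def S_def by auto
  have cS: "card S \<le> card V" unfolding S_def by (rule card_image_le[OF assms(1)])
  have big: "card V \<le> 2 ^ (2 ^ k)" if "k \<ge> k0" for k
  proof -
    have a: "card V \<le> k" using that k0_def by simp
    have b: "k < 2 ^ k" by (rule less_exp)
    have c: "2 ^ k < (2::nat) ^ (2 ^ k)" by (rule less_exp)
    from a b c show ?thesis by linarith
  qed
  have adm: "admissible V A0"
    unfolding admissible_def
  proof (intro allI conjI)
    fix k
    show "is_partition V (A0 k)" using pV pS unfolding A0_def by auto
    show "card (A0 k) \<le> M_card k"
    proof (cases "k < k0")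
      case True thus ?thesis unfolding A0_def M_card_def by auto
    next
      case False
      hence "k \<noteq> 0" unfolding k0_def by auto
      thus ?thesis using False cS big[of k] unfolding A0_def M_card_def by auto
    qed
    show "refines (A0 (Suc k)) (A0 k)"
      unfolding refines_def A0_def S_def by auto
  qed
  define D where "D = diam_R V c V"
  define f where "f = (\<lambda>k. if k < k0 then 2 powr (real k / 2) * D else 0)"
  have D0: "0 \<le> D" unfolding D_def by (rule diam_nonneg[OF assms(1)])
  have f0: "0 \<le> f k" for k unfolding f_def using D0 by auto
  have "ps V c A0 x n \<le> sum f {..<k0}" if x: "x \<in> V" for x n
  proof -
    have "ps V c A0 x n = sum f {..<n}"
    proof (rule sum.cong)
      fix k assume "k \<in> {..<n}"
      show "2 powr (real k / 2) * diam_R V c (block (A0 k) x) = f k"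
      proof (cases "k < k0")
        case True
        hence "block (A0 k) x = V" using block_eq[OF pV _ x] unfolding A0_def by simp
        thus ?thesis using True unfolding f_def D_def by simp
      next
        case False
        have "{x} \<in> S" using x unfolding S_def by auto
        hence "block (A0 k) x = {x}" using block_eq[OF pS] False unfolding A0_def by simp
        thus ?thesis using False unfolding f_def by (simp add: diam_single)
      qed
    qed simp
    also have "\<dots> = sum f ({..<n} \<inter> {..<k0})"
      by (rule sum.mono_neutral_right) (auto simp: f_def)
    also have "\<dots> \<le> sum f {..<k0}"
      by (rule sum_mono2) (auto simp: f0)
    finally show ?thesis .
  qed
  thus ?thesis using adm by blast
qed



lemma net_props:
  assumes "network V c"
  shows "finite V" "\<And>x y. c x y = c y x" "\<And>x y. 0 \<le> c x y" "\<And>x. c x x = 0"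
    "\<And>x y. 0 < c x y \<Longrightarrow> x \<in> V \<and> y \<in> V"
    "\<And>x y. x \<in> V \<Longrightarrow> y \<in> V \<Longrightarrow> (\<lambda>a b. a \<in> V \<and> b \<in> V \<and> 0 < c a b)\<^sup>*\<^sup>* x y"
  using assms unfolding network_def by blast+
lemma energy_compl: "energy V c (\<lambda>z. 1 - f z) = energy V c f"
proof -
  have "(1 - f x - (1 - f y))^2 = (f x - f y)^2" for x y :: 'a by (simp add: power2_eq_square algebra_simps)
  thus ?thesis unfolding energy_def by simp
qed


lemma energy_ind:
  assumes net: "network V c" and v: "v \<in> V"
  shows "energy V c (\<lambda>z. if z = v then 1 else 0) = cond_at V c v"
proof -
  note fin = net_props(1)[OF net] and sym = net_props(2)[OF net] and diag = net_props(4)[OF net]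
  have pt: "c x y * ((if x = v then 1 else 0) - (if y = v then 1 else 0))^2
        = (if x = v then c v y else 0) + (if y = v then c x v else 0)" for x y :: 'a
    using diag by (cases "x = v"; cases "y = v") auto
  have i: "(\<Sum>y\<in>V. if x = v then c v y else 0) = (if x = v then sum (c v) V else 0)" for x by simp
  have "(\<Sum>x\<in>V. \<Sum>y\<in>V. c x y * ((if x = v then 1 else 0) - (if y = v then 1 else (0::real)))^2)
      = (\<Sum>x\<in>V. (if x = v then cond_at V c v else 0) + c x v)"
    unfolding pt sum.distrib i using v fin by (simp add: cond_at_def)
  also have "\<dots> = cond_at V c v + (\<Sum>x\<in>V. c v x)"
    unfolding sum.distrib using v fin sym by (simp add: cond_at_def)
  also have "\<dots> = cond_at V c v + cond_at V c v" by (simp add: cond_at_def)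
  finally show ?thesis unfolding energy_def by simp
qed



lemma energy_pos:
  assumes net: "network V c" and xy: "x \<in> V" "y \<in> V" "x \<noteq> y"
  shows "\<exists>\<epsilon>>0. \<forall>f. f x = 1 \<and> f y = 0 \<longrightarrow> \<epsilon> \<le> energy V c f"
proof -
  define P where "P = (\<lambda>a b. a \<in> V \<and> b \<in> V \<and> 0 < c a b)"
  note fin = net_props(1)[OF net] and nn = net_props(3)[OF net]
  have "P\<^sup>*\<^sup>* x y" unfolding P_def by (rule net_props(6)[OF net xy(1,2)])
  then obtain n where n: "(P ^^ n) x y" using rtranclp_imp_relpowp by metis
  have n0: "n \<noteq> 0" using n xy by (cases n) simp_all
  define E where "E = {(a,b). a \<in> V \<and> b \<in> V \<and> 0 < c a b}"
  have finE: "finite E" unfolding E_def by (rule finite_subset[of _ "V \<times> V"]) (auto simp: fin)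
  define \<delta> where "\<delta> = Min (insert 1 ((\<lambda>(a,b). c a b) ` E))"
  have \<delta>pos: "0 < \<delta>" unfolding \<delta>_def using finE by (auto simp: E_def)
  have \<delta>le: "\<delta> \<le> c a b" if "P a b" for a b
    unfolding \<delta>_def using that finE by (intro Min_le) (auto simp: E_def P_def)
  have edge: "\<bar>f a - f b\<bar> \<le> sqrt (2 * energy V c f / \<delta>)" if "P a b" for f a b
  proof -
    have ab: "a \<in> V" "b \<in> V" using that unfolding P_def by auto
    have "\<delta> * (f a - f b)^2 \<le> c a b * (f a - f b)^2"
      using \<delta>le[OF that] by (intro mult_right_mono) auto
    also have "\<dots> \<le> (\<Sum>y\<in>V. c a y * (f a - f y)^2)"
      by (rule member_le_sum[where f = "\<lambda>y. c a y * (f a - f y)^2"]) (use ab fin nn in auto)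
    also have "\<dots> \<le> (\<Sum>x\<in>V. \<Sum>y\<in>V. c x y * (f x - f y)^2)"
      by (rule member_le_sum[where f = "\<lambda>x. \<Sum>y\<in>V. c x y * (f x - f y)^2"])
        (use ab fin nn in \<open>auto intro!: sum_nonneg\<close>)
    also have "\<dots> = 2 * energy V c f" unfolding energy_def by simp
    finally have "(f a - f b)^2 \<le> 2 * energy V c f / \<delta>"
      using \<delta>pos by (simp add: field_simps)
    hence "\<bar>f a - f b\<bar>^2 \<le> 2 * energy V c f / \<delta>" by simp
    thus ?thesis by (rule real_le_rsqrt)
  qed
  have path: "\<And>a b. (P ^^ m) a b \<Longrightarrow> \<bar>f a - f b\<bar> \<le> m * sqrt (2 * energy V c f / \<delta>)" for m f
  proof (induction m)
    case 0 thus ?case by simp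
  next
    case (Suc m)
    then obtain z where z: "(P ^^ m) a z" "P z b" by auto
    have "\<bar>f a - f b\<bar> \<le> \<bar>f a - f z\<bar> + \<bar>f z - f b\<bar>" by simp
    also have "\<dots> \<le> m * sqrt (2 * energy V c f / \<delta>) + sqrt (2 * energy V c f / \<delta>)"
      using Suc.IH[OF z(1)] edge[OF z(2), of f] by linarith
    finally show ?case by (simp add: algebra_simps)
  qed
  define \<epsilon> where "\<epsilon> = \<delta> / (2 * (real n)^2)"
  have "\<epsilon> \<le> energy V c f" if f: "f x = 1" "f y = 0" for f
  proof -
    define e where "e = energy V c f"
    define s where "s = sqrt (2 * e / \<delta>)"
    have h: "1 \<le> real n * s" using path[OF n, of f] f unfolding s_def e_def by simp
    have np: "0 < real n" using n0 by simp
    have sp: "0 < s"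
    proof (rule ccontr)
      assume "\<not> 0 < s"
      hence "real n * s \<le> 0" using np by (simp add: mult_nonneg_nonpos)
      thus False using h by linarith
    qed
    hence q: "0 < 2 * e / \<delta>" unfolding s_def by simp
    have "1 \<le> (real n * s)^2" using h by (rule one_le_power)
    also have "\<dots> = (real n)^2 * (2 * e / \<delta>)" unfolding s_def power_mult_distrib using q by simp
    finally have k: "1 \<le> (real n)^2 * (2 * e / \<delta>)" .
    have "\<delta> \<le> (real n)^2 * (2 * e)" using k \<delta>pos by (simp add: field_simps)
    thus ?thesis unfolding \<epsilon>_def e_def[symmetric] using \<delta>pos np by (simp add: field_simps)
  qed
  moreover have "0 < \<epsilon>" unfolding \<epsilon>_def using \<delta>pos n0 by simp
  ultimately show ?thesis by blast
qed

lemma R_lower: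
  assumes net: "network V c" and xy: "x \<in> V" "y \<in> V" "x \<noteq> y"
  shows "1 / cond_at V c x \<le> R_eff V c x y \<and> 1 / cond_at V c y \<le> R_eff V c x y \<and> 0 < cond_at V c x"
proof -
  obtain \<epsilon> where \<epsilon>: "\<epsilon> > 0" "\<forall>f. f x = 1 \<and> f y = 0 \<longrightarrow> \<epsilon> \<le> energy V c f"
    using energy_pos[OF assms] by blast
  define Q where "Q = {energy V c f | f. f x = 1 \<and> f y = 0}"
  have m1: "cond_at V c x \<in> Q" unfolding Q_def
    using energy_ind[OF net xy(1)] xy(3) by (intro CollectI exI[of _ "\<lambda>z. if z = x then 1 else 0"]) auto
  have m2: "cond_at V c y \<in> Q" unfolding Q_def
    using energy_ind[OF net xy(2)] energy_compl[of V c "\<lambda>z. if z = y then 1 else 0"] xy(3)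
    by (intro CollectI exI[of _ "\<lambda>z. 1 - (if z = y then 1 else 0)"]) auto
  have bdd: "bdd_below Q" unfolding Q_def using \<epsilon>(2) by (intro bdd_belowI[of _ \<epsilon>]) auto
  have ge: "\<epsilon> \<le> Inf Q" using m1 \<epsilon>(2) unfolding Q_def by (intro cInf_greatest) auto
  have l1: "Inf Q \<le> cond_at V c x" by (rule cInf_lower[OF m1 bdd])
  have l2: "Inf Q \<le> cond_at V c y" by (rule cInf_lower[OF m2 bdd])
  have R: "R_eff V c x y = 1 / Inf Q" unfolding R_eff_def Q_def using xy(3) by simp
  have pos: "0 < Inf Q" using ge \<epsilon>(1) by linarith
  show ?thesis unfolding R using pos l1 l2 by (auto intro!: divide_left_mono)
qed




lemma geo_term:
  assumes "1 \<le> j"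
  shows "4 ^ j * exp (- 14 * (real j - 1)) \<le> 8 * (1/2::real) ^ j"
proof -
  obtain i where j: "j = Suc i" using assms by (cases j) auto
  have e: "8 \<le> exp (14::real)" using exp_ge_add_one_self[of 14] by linarith
  have "4 * exp (-14::real) \<le> 1/2"
  proof -
    have "8 * exp (-14) \<le> exp 14 * exp (-14::real)" using e by (intro mult_right_mono) auto
    moreover have "exp 14 * exp (-14::real) = 1" by (simp add: exp_add[symmetric])
    ultimately show ?thesis by linarith
  qed
  hence "(4 * exp (-14::real)) ^ i \<le> (1/2) ^ i" by (intro power_mono) auto
  moreover have "exp (- 14 * (real j - 1)) = exp (-14) ^ i"
    using exp_of_nat_mult[of i "-14::real"] unfolding j by (simp add: algebra_simps)
  ultimately have "4 ^ i * exp (- 14 * (real j - 1)) \<le> (1/2) ^ i"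
    by (simp add: power_mult_distrib)
  thus ?thesis unfolding j by simp
qed

lemma sum_bound:
  fixes s :: "'a \<Rightarrow> real"
  assumes fin: "finite V" and s1: "\<forall>v\<in>V. 1 \<le> s v"
    and cnt: "\<forall>j::nat. 1 \<le> j \<longrightarrow> card {v\<in>V. s v \<le> real j} \<le> 4 ^ j"
    and u: "16 \<le> u"
  shows "(\<Sum>v\<in>V. exp (- u * s v)) \<le> 16 * exp (- u / 8)"
proof -
  define m where "m = (\<lambda>v. nat \<lceil>s v\<rceil>)"
  define g where "g = (\<lambda>j::nat. exp (- 14 * (real j - 1)))"
  have m1: "1 \<le> m v" if "v \<in> V" for v
  proof -
    have "1 \<le> s v" using s1 that by auto
    hence "(1::int) \<le> \<lceil>s v\<rceil>" by (metis ceiling_mono ceiling_one)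
    thus ?thesis unfolding m_def by arith
  qed
  have ms: "s v \<le> real (m v)" "real (m v) - 1 \<le> s v" if "v \<in> V" for v
  proof -
    have "1 \<le> s v" using s1 that by auto
    hence "(1::int) \<le> \<lceil>s v\<rceil>" by (metis ceiling_mono ceiling_one)
    hence e: "real (m v) = of_int \<lceil>s v\<rceil>" unfolding m_def by simp
    show "s v \<le> real (m v)" unfolding e by (rule le_of_int_ceiling)
    show "real (m v) - 1 \<le> s v" unfolding e by (rule of_int_ceiling_diff_one_le)
  qed
  have pt: "exp (- u * s v) \<le> exp (- u / 8) * g (m v)" if v: "v \<in> V" for v
  proof -
    have "(u - 14) * 1 \<le> (u - 14) * s v" using s1 v u by (intro mult_left_mono) auto
    hence "- u * s v \<le> - u / 8 + (- 14 * (real (m v) - 1))" using ms[OF v] u by (simp add: algebra_simps)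
    hence "exp (- u * s v) \<le> exp (- u / 8 + (- 14 * (real (m v) - 1)))" by simp
    thus ?thesis unfolding g_def exp_add .
  qed
  have "(\<Sum>v\<in>V. exp (- u * s v)) \<le> (\<Sum>v\<in>V. exp (- u / 8) * g (m v))"
    by (rule sum_mono) (rule pt)
  also have "\<dots> = exp (- u / 8) * (\<Sum>v\<in>V. g (m v))" by (simp add: sum_distrib_left)
  also have "(\<Sum>v\<in>V. g (m v)) = (\<Sum>j\<in>m ` V. \<Sum>v\<in>{v \<in> V. m v = j}. g (m v))"
    by (rule sum.image_gen[OF fin])
  also have "\<dots> = (\<Sum>j\<in>m ` V. real (card {v \<in> V. m v = j}) * g j)"
    by (rule sum.cong) auto
  also have "\<dots> \<le> (\<Sum>j\<in>m ` V. 8 * (1/2) ^ j)"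
  proof (rule sum_mono)
    fix j assume j: "j \<in> m ` V"
    hence j1: "1 \<le> j" using m1 by auto
    have "{v \<in> V. m v = j} \<subseteq> {v\<in>V. s v \<le> real j}" using ms by auto
    hence "card {v \<in> V. m v = j} \<le> card {v\<in>V. s v \<le> real j}" by (rule card_mono[rotated]) (use fin in simp)
    also have "\<dots> \<le> 4 ^ j" using cnt j1 by auto
    finally have "real (card {v \<in> V. m v = j}) \<le> 4 ^ j" by (metis of_nat_le_iff of_nat_numeral of_nat_power)
    hence "real (card {v \<in> V. m v = j}) * g j \<le> 4 ^ j * g j" unfolding g_def by (intro mult_right_mono) auto
    also have "\<dots> \<le> 8 * (1/2) ^ j" unfolding g_def by (rule geo_term[OF j1])
    finally show "real (card {v \<in> V. m v = j}) * g j \<le> 8 * (1/2) ^ j" .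
  qed
  also have "\<dots> = 8 * (\<Sum>j\<in>m ` V. (1/2::real) ^ j)" by (simp add: sum_distrib_left)
  also have "(\<Sum>j\<in>m ` V. (1/2::real) ^ j) \<le> (\<Sum>j. (1/2) ^ j)"
    by (rule sum_le_suminf) (use fin in auto)
  also have "(\<Sum>j. (1/2::real) ^ j) = 2" using suminf_geometric[of "1/2::real"] by simp
  finally show ?thesis by (simp add: mult_left_mono)
qed



lemma card2_other:
  assumes "finite V" "card V \<ge> 2" "v \<in> V"
  shows "\<exists>w\<in>V. w \<noteq> v"
proof (rule ccontr)
  assume "\<not> ?thesis"
  hence "V \<subseteq> {v}" by auto
  hence "card V \<le> 1" using card_mono[of "{v}" V] by simp
  thus False using assms by simp
qed

lemma powr_half: "2 powr (real k / 2) = sqrt (2 ^ k)"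
  using powr_half_sqrt_powr[of 2 "real k"] by (simp add: powr_realpow)

lemma lower1:
  assumes net: "network V c" and c2: "card V \<ge> 2" and v: "v \<in> V"
  shows "1 \<le> cond_at V c v * (gamma2 V c)^2 \<and> 0 < cond_at V c v"
proof -
  note fin = net_props(1)[OF net]
  have ne: "V \<noteq> {}" using v by auto
  obtain w where w: "w \<in> V" "w \<noteq> v" using card2_other[OF fin c2 v] by blast
  have cpos: "0 < cond_at V c v" using R_lower[OF net v w(1) w(2)[symmetric]] by simp
  obtain A0 B where A0: "admissible V A0" "\<forall>x\<in>V. \<forall>n. ps V c A0 x n \<le> B"
    using adm_exists[OF fin ne] by blast
  have "1 / sqrt (cond_at V c v) \<le> gamma2 V c"
  proof (rule gamma2_ge[OF A0], intro allI impI)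
    fix A assume adm: "admissible V A"
    have "card {v, w} > M_card 0" using w by (simp add: M_card_def)
    then obtain x y where xy: "x \<in> {v,w}" "y \<in> {v,w}" "x \<noteq> y" "y \<in> block (A 0) x"
      using pigeon[OF adm fin, of "{v,w}" 0] v w by blast
    have xV: "x \<in> V" "y \<in> V" using xy v w by auto
    have "1 / cond_at V c v \<le> R_eff V c x y"
      using R_lower[OF net xV xy(3)] xy(1,2,3) by auto
    hence "sqrt (1 / cond_at V c v) \<le> sqrt (R_eff V c x y)" by simp
    also have "\<dots> \<le> ps V c A x (Suc 0)" using ps_ge[OF adm fin xV(1) xy(4), of c] by simp
    finally have "1 / sqrt (cond_at V c v) \<le> ps V c A x (Suc 0)" by (simp add: real_sqrt_divide)
    thus "\<exists>x\<in>V. \<exists>n. 1 / sqrt (cond_at V c v) \<le> ps V c A x n"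
      using xV by blast
  qed
  hence "(1 / sqrt (cond_at V c v))^2 \<le> (gamma2 V c)^2"
    using cpos by (intro power_mono) auto
  hence "1 / cond_at V c v \<le> (gamma2 V c)^2" using cpos by (simp add: power_divide)
  hence "1 \<le> cond_at V c v * (gamma2 V c)^2" using cpos by (simp add: field_simps)
  thus ?thesis using cpos by simp
qed

lemma count:
  assumes net: "network V c" and c2: "card V \<ge> 2" and j: "1 \<le> j"
  shows "card {v\<in>V. cond_at V c v * (gamma2 V c)^2 \<le> real j} \<le> 4 ^ j"
proof -
  note fin = net_props(1)[OF net]
  define \<gamma> where "\<gamma> = gamma2 V c"
  define S where "S = {v\<in>V. cond_at V c v * \<gamma>^2 \<le> real j}"
  obtain k0 where k0: "2 ^ k0 \<le> j" "j < 2 ^ (k0 + 1)" using ex_power_ivl1[of 2 j] j by auto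
  define k where "k = Suc k0"
  have ne: "V \<noteq> {}" using c2 by auto
  then obtain v0 where v0: "v0 \<in> V" by auto
  have gpos: "0 < \<gamma>"
  proof -
    have "1 \<le> cond_at V c v0 * \<gamma>^2" using lower1[OF net c2 v0] unfolding \<gamma>_def by simp
    hence "\<gamma> \<noteq> 0" by auto
    moreover have "0 \<le> \<gamma>"
    proof -
      obtain A0 B where A0: "admissible V A0" "\<forall>x\<in>V. \<forall>n. ps V c A0 x n \<le> B"
        using adm_exists[OF fin ne] by blast
      show ?thesis unfolding \<gamma>_def
        by (rule gamma2_ge[OF A0]) (use v0 in \<open>auto intro!: exI[of _ 0]\<close>)
    qed
    ultimately show ?thesis by simp
  qed
  have "card S \<le> M_card k"
  proof (rule ccontr)
    assume big: "\<not> card S \<le> M_card k"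
    obtain A0 B where A0: "admissible V A0" "\<forall>x\<in>V. \<forall>n. ps V c A0 x n \<le> B"
      using adm_exists[OF fin ne] by blast
    have "sqrt (2 ^ k) * \<gamma> / sqrt j \<le> gamma2 V c"
    proof (rule gamma2_ge[OF A0], intro allI impI)
      fix A assume adm: "admissible V A"
      obtain x y where xy: "x \<in> S" "y \<in> S" "x \<noteq> y" "y \<in> block (A k) x"
        using pigeon[OF adm fin, of S k] big unfolding S_def by force
      have xV: "x \<in> V" "y \<in> V" using xy unfolding S_def by auto
      have Rx: "1 / cond_at V c x \<le> R_eff V c x y" and cx: "0 < cond_at V c x"
        using R_lower[OF net xV xy(3)] by auto
      have sx: "cond_at V c x * \<gamma>^2 \<le> real j" using xy unfolding S_def by auto
      have "\<gamma> / sqrt j \<le> 1 / sqrt (cond_at V c x)"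
      proof -
        have "sqrt (cond_at V c x * \<gamma>^2) \<le> sqrt j" using sx by simp
        hence "sqrt (cond_at V c x) * \<gamma> \<le> sqrt j" using gpos by (simp add: real_sqrt_mult)
        thus ?thesis using cx j by (simp add: field_simps)
      qed
      also have "\<dots> = sqrt (1 / cond_at V c x)" by (simp add: real_sqrt_divide)
      also have "\<dots> \<le> sqrt (R_eff V c x y)" using Rx by simp
      finally have "sqrt (2 ^ k) * (\<gamma> / sqrt j) \<le> sqrt (2 ^ k) * sqrt (R_eff V c x y)"
        by (intro mult_left_mono) auto
      also have "\<dots> \<le> ps V c A x (Suc k)" using ps_ge[OF adm fin xV(1) xy(4), of c] by (simp add: powr_half)
      finally have "sqrt (2 ^ k) * \<gamma> / sqrt (real j) \<le> ps V c A x (Suc k)" by simp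
      thus "\<exists>x\<in>V. \<exists>n. sqrt (2 ^ k) * \<gamma> / sqrt (real j) \<le> ps V c A x n"
        using xV by blast
    qed
    hence "sqrt (2 ^ k) * \<gamma> / sqrt j \<le> \<gamma>" unfolding \<gamma>_def .
    hence "sqrt (2 ^ k) \<le> sqrt j" using gpos j by (simp add: field_simps)
    hence "(2::real) ^ k \<le> real j" by simp
    hence "(2::nat) ^ k \<le> j" by (metis of_nat_le_iff of_nat_numeral of_nat_power)
    thus False using k0 unfolding k_def by simp
  qed
  also have "M_card k = 2 ^ (2 ^ k)" unfolding k_def M_card_def by simp
  also have "\<dots> \<le> 2 ^ (2 * j)" using k0 unfolding k_def by (intro power_increasing) auto
  also have "\<dots> = 4 ^ j" by (simp add: power_mult)
  finally show ?thesis unfolding S_def \<gamma>_def .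
qed

theorem mainTheorem12:
  shows "\<exists>K::real. \<forall>(V::nat set) c. network V c \<and> card V \<ge> 2 \<longrightarrow>
     (\<forall>u::real. u \<ge> 16 \<longrightarrow>
        (\<Sum>v\<in>V. exp (- u * cond_at V c v * (gamma2 V c)^2)) \<le> K * exp (- u / 8))"
proof (intro exI[of _ 16] allI impI)
  fix V :: "nat set" and c u
  assume a: "network V c \<and> card V \<ge> 2" and u: "16 \<le> (u::real)"
  have net: "network V c" and c2: "2 \<le> card V" using a by auto
  have s1: "\<forall>v\<in>V. 1 \<le> cond_at V c v * (gamma2 V c)\<^sup>2"
    using lower1[OF net c2] by simp
  have cn: "\<forall>j::nat. 1 \<le> j \<longrightarrow> card {v\<in>V. cond_at V c v * (gamma2 V c)\<^sup>2 \<le> real j} \<le> 4 ^ j"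
    using count[OF net c2] by simp
  have "(\<Sum>v\<in>V. exp (- u * (cond_at V c v * (gamma2 V c)^2))) \<le> 16 * exp (- u / 8)"
    by (rule sum_bound[OF net_props(1)[OF net] s1 cn u])
  thus "(\<Sum>v\<in>V. exp (- u * cond_at V c v * (gamma2 V c)^2)) \<le> 16 * exp (- u / 8)"
    by (simp add: mult.assoc)
qed


end
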